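(* Let $\varphi(z)\in K(z)$ have degree $d\ge1$, and let $(F,G)$ be a normalized representation of $\varphi$, with $F(X,Y)=\sum_{i=0}^d a_iX^iY^{d-i}$ and $G(X,Y)=\sum_{i=0}^d b_iX^iY^{d-i}$. Then $$\mathrm{GIR}(\varphi)=\max_{i\ne j}\left|\det\begin{pmatrix}a_i&a_j\\ b_i&b_j\end{pmatrix}\right|.$$
   Context: $K$ is a complete, algebraically closed field with a nontrivial nonarchimedean absolute value; $\mathcal O=\{|z|\le1\}$, $\mathcal O^\times$ its units. A normalized representation of $\varphi$ is a pair of homogeneous $F,G\in\mathcal O[X,Y]$ of degree $d$, with no common factor, at least one coefficient in $\mathcal O^\times$, such that $\varphi([X:Y])=[F(X,Y):G(X,Y)]$ (with $z=X/Y$). $\mathbf P^1_{\mathrm{Berk}}$ is the Berkovich projective line over $K$; $\zeta_{a,r}$ is the point corresponding to the disc $D(a,r)=\{z:|z-a|\le r\}$, $\zeta_G=\zeta_{0,1}$. For $x=\zeta_{a,r}$, $r>0$, $\mathrm{diam}_G(x)=r/\max(1,|a|,r)^2$ (equivalently $q^{-\rho(\zeta_G,x)}$ for the logarithmic path metric $\rho$). Gauss Image radius: $\mathrm{GIR}(\varphi)=\mathrm{diam}_G(\varphi(\zeta_G))$. *)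

theory Defs
  imports "HOL-Computational_Algebra.Polynomial"
begin

definition nonarch_abs :: "('a::field \<Rightarrow> real) \<Rightarrow> bool" where
  "nonarch_abs av \<longleftrightarrow>
     (\<forall>x. av x \<ge> 0) \<and> (\<forall>x. av x = 0 \<longleftrightarrow> x = 0) \<and>
     (\<forall>x y. av (x * y) = av x * av y) \<and>
     (\<forall>x y. av (x + y) \<le> max (av x) (av y))"

definition av_nontrivial :: "('a::field \<Rightarrow> real) \<Rightarrow> bool" where
  "av_nontrivial av \<longleftrightarrow> (\<exists>x. av x \<noteq> 0 \<and> av x \<noteq> 1)"

definition av_complete :: "('a::field \<Rightarrow> real) \<Rightarrow> bool" where
  "av_complete av \<longleftrightarrow>
     (\<forall>s :: nat \<Rightarrow> 'a.
        (\<forall>\<epsilon>>0. \<exists>N. \<forall>m\<ge>N. \<forall>n\<ge>N. av (s m - s n) < \<epsilon>) \<longrightarrow>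
        (\<exists>L. \<forall>\<epsilon>>0. \<exists>N. \<forall>n\<ge>N. av (s n - L) < \<epsilon>))"

definition alg_closed :: "'a::field itself \<Rightarrow> bool" where
  "alg_closed _ \<longleftrightarrow> (\<forall>p :: 'a poly. degree p \<ge> 1 \<longrightarrow> (\<exists>z. poly p z = 0))"

definition CNA_field :: "('a::field \<Rightarrow> real) \<Rightarrow> bool" where
  "CNA_field av \<longleftrightarrow> nonarch_abs av \<and> av_nontrivial av \<and> av_complete av \<and> alg_closed TYPE('a)"

text \<open>A homogeneous form of degree e, H(X,Y) = sum c_i X^i Y^(e-i), is represented by its
 dehomogenisation h = H(z,1) (a polynomial of degree at most e) together with e.
 This is a bijection between forms of degree e and polynomials of degree \<le> e,
 and products of forms correspond to products of polynomials (degrees add).\<close>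

definition form_poly :: "(nat \<Rightarrow> 'a::comm_ring_1) \<Rightarrow> nat \<Rightarrow> 'a poly" where
  "form_poly c d = (\<Sum>i\<le>d. monom (c i) i)"

text \<open>H (degree e, dehomogenisation h) divides F (degree d, dehomogenisation f) in K[X,Y]:
 F = H * Q for some form Q of degree d - e.\<close>
definition form_dvd :: "'a::comm_ring_1 poly \<Rightarrow> nat \<Rightarrow> 'a poly \<Rightarrow> nat \<Rightarrow> bool" where
  "form_dvd h e f d \<longleftrightarrow> e \<le> d \<and> (\<exists>q. degree q \<le> d - e \<and> f = h * q)"

text \<open>F, G (forms of degree d) have no common factor: no nonzero form H of degree \<ge> 1
 divides both (every factor of a homogeneous polynomial is homogeneous).\<close>
definition forms_no_common_factor :: "'a::comm_ring_1 poly \<Rightarrow> 'a poly \<Rightarrow> nat \<Rightarrow> bool" where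
  "forms_no_common_factor f g d \<longleftrightarrow>
     \<not> (\<exists>h e. 1 \<le> e \<and> h \<noteq> 0 \<and> degree h \<le> e \<and> form_dvd h e f d \<and> form_dvd h e g d)"

definition normalized_rep :: "('a::field \<Rightarrow> real) \<Rightarrow> nat \<Rightarrow> (nat \<Rightarrow> 'a) \<Rightarrow> (nat \<Rightarrow> 'a) \<Rightarrow> bool" where
  "normalized_rep av d a b \<longleftrightarrow>
     (\<forall>i\<le>d. av (a i) \<le> 1 \<and> av (b i) \<le> 1) \<and>
     (\<exists>i\<le>d. av (a i) = 1 \<or> av (b i) = 1) \<and>
     forms_no_common_factor (form_poly a d) (form_poly b d) d"

definition disc_pt :: "('a::field \<Rightarrow> real) \<Rightarrow> 'a \<Rightarrow> real \<Rightarrow> 'a poly \<Rightarrow> real" where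
  "disc_pt av c r = (\<lambda>g. SUP z\<in>{z. av (z - c) \<le> r}. av (poly g z))"

definition gauss_norm :: "('a::field \<Rightarrow> real) \<Rightarrow> 'a poly \<Rightarrow> real" where
  "gauss_norm av p = (MAX i\<in>{..degree p}. av (coeff p i))"

text \<open>Image of the Gauss point under phi = f/g: the seminorm h \<mapsto> [h o phi]_{zeta_G},
 where h(f/g) = (sum_k h_k f^k g^(n-k)) / g^n with n = deg h.\<close>
definition image_gauss_pt :: "('a::field \<Rightarrow> real) \<Rightarrow> 'a poly \<Rightarrow> 'a poly \<Rightarrow> 'a poly \<Rightarrow> real" where
  "image_gauss_pt av f g = (\<lambda>h.
      gauss_norm av (\<Sum>k\<le>degree h. smult (coeff h k) (f ^ k * g ^ (degree h - k)))
      / gauss_norm av g ^ degree h)"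

definition diam_G :: "('a::field \<Rightarrow> real) \<Rightarrow> ('a poly \<Rightarrow> real) \<Rightarrow> real" where
  "diam_G av x = (THE t. \<exists>c r. r > 0 \<and> x = disc_pt av c r \<and> t = r / (max 1 (max (av c) r))\<^sup>2)"

definition GIR :: "('a::field \<Rightarrow> real) \<Rightarrow> 'a poly \<Rightarrow> 'a poly \<Rightarrow> real" where
  "GIR av f g = diam_G av (image_gauss_pt av f g)"

end

theory Submission
  imports Defs
begin

locale cna = fixes av :: "'a::field \<Rightarrow> real" assumes cna: "CNA_field av"
begin

lemma na: "nonarch_abs av" using cna unfolding CNA_field_def by auto
lemma av_nonneg[simp]: "av x \<ge> 0" using na unfolding nonarch_abs_def by auto
lemma av_eq0[simp]: "av x = 0 \<longleftrightarrow> x = 0" using na unfolding nonarch_abs_def by auto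
lemma av_mult[simp]: "av (x * y) = av x * av y" using na unfolding nonarch_abs_def by auto
lemma av_ultra: "av (x + y) \<le> max (av x) (av y)" using na unfolding nonarch_abs_def by auto
lemma av_pos[simp]: "av x > 0 \<longleftrightarrow> x \<noteq> 0" using av_nonneg[of x] av_eq0[of x] by linarith
lemma av_1[simp]: "av 1 = 1"
proof -
  have "av 1 = av 1 * av 1" using av_mult[of 1 1] by simp
  moreover have "av 1 \<noteq> 0" by simp
  ultimately show ?thesis by (metis mult_cancel_left1)
qed
lemma av_0[simp]: "av 0 = 0" by simp
lemma av_minus1: "av (-1) = 1"
proof -
  have h: "av (-1) * av (-1) = 1" using av_mult[of "-1" "-1"] by simp
  have "(av (-1) - 1) * (av (-1) + 1) = 0" using h by (simp add: algebra_simps)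
  moreover have "av (-1) + 1 > 0" using av_nonneg[of "-1"] by linarith
  ultimately show ?thesis by simp
qed
lemma av_minus[simp]: "av (- x) = av x"
  using av_mult[of "-1" x] av_minus1 by simp
lemma av_commute: "av (x - y) = av (y - x)"
  by (metis av_minus minus_diff_eq)
lemma av_diff: "av (x - y) \<le> max (av x) (av y)"
  using av_ultra[of x "-y"] by simp
lemma av_inverse[simp]: "av (inverse x) = inverse (av x)"
proof (cases "x = 0")
  case False
  have "av x * av (inverse x) = 1" using av_mult[of x "inverse x"] False by simp
  from inverse_unique[OF this] show ?thesis by simp
qed simp
lemma av_divide[simp]: "av (x / y) = av x / av y"
  by (simp add: divide_inverse)
lemma av_power[simp]: "av (x ^ n) = av x ^ n"
  by (induction n) auto
lemma av_add_eq: assumes "av y < av x" shows "av (x + y) = av x"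
proof -
  have "av (x + y) \<le> av x" using av_ultra[of x y] assms by simp
  moreover have "av x \<le> max (av (x + y)) (av y)" using av_diff[of "x+y" y] by simp
  ultimately show ?thesis using assms by linarith
qed
lemma av_prod_list: "av (prod_list (map f xs)) = prod_list (map (\<lambda>x. av (f x)) xs)"
  by (induction xs) auto

lemma alg: "degree (p::'a poly) \<ge> 1 \<Longrightarrow> \<exists>z. poly p z = 0"
  using cna unfolding CNA_field_def alg_closed_def by blast

lemma exists_gt1: "\<exists>y. av y > 1"
proof -
  obtain x where x: "av x \<noteq> 0" "av x \<noteq> 1" using cna unfolding CNA_field_def av_nontrivial_def by auto
  show ?thesis
  proof (cases "av x > 1")
    case True then show ?thesis by blast
  next
    case False
    then have "av x < 1" "av x > 0" using x av_nonneg[of x] by linarith+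
    then have "av (inverse x) > 1" by (simp add: one_less_inverse)
    then show ?thesis by blast
  qed
qed

lemma density: assumes "R > 1" shows "\<exists>y. 1 < av y \<and> av y < R"
proof -
  obtain x where x: "av x > 1" using exists_gt1 by blast
  obtain n where n: "av x < R ^ n" using real_arch_pow[OF assms] by blast
  have n1: "n \<ge> 1" using n x by (cases n) auto
  define p where "p = [:- x:] + monom 1 n"
  have dp: "degree p = n" unfolding p_def using n1
    by (subst degree_add_eq_right) (auto simp: degree_monom_eq)
  obtain y where "poly p y = 0" using alg[of p] dp n1 by auto
  then have yx: "y ^ n = x" unfolding p_def by (simp add: poly_monom)
  then have ay: "av y ^ n = av x" by (metis av_power)
  have "av y > 1"
  proof (rule ccontr)
    assume "\<not> av y > 1"
    then have "av y ^ n \<le> 1" by (simp add: power_le_one)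
    then show False using ay x by simp
  qed
  moreover have "av y < R"
  proof (rule ccontr)
    assume "\<not> av y < R"
    then have "R ^ n \<le> av y ^ n" using assms by (simp add: power_mono)
    then show False using ay n by simp
  qed
  ultimately show ?thesis by blast
qed

lemma infinite_univ: "infinite (UNIV :: 'a set)"
proof -
  obtain y where y: "av y > 1" using exists_gt1 by blast
  have "inj (\<lambda>n::nat. y ^ n)"
  proof (rule injI)
    fix m n :: nat assume "y ^ m = y ^ n"
    then have "av y ^ m = av y ^ n" by (metis av_power)
    then show "m = n" using y by (simp add: power_inject_exp)
  qed
  then have "infinite (range (\<lambda>n::nat. y ^ n))" by (rule range_inj_infinite)
  then show ?thesis by (rule infinite_super[rotated]) simp
qed

definition lin :: "'a \<Rightarrow> 'a poly" where "lin \<alpha> = [:-\<alpha>, 1:]"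

lemma lin_nz[simp]: "lin \<alpha> \<noteq> 0" by (simp add: lin_def)
lemma degree_lin[simp]: "degree (lin \<alpha>) = 1" by (simp add: lin_def)
lemma poly_lin[simp]: "poly (lin \<alpha>) z = z - \<alpha>" by (simp add: lin_def)

lemma prod_lin_nz: "prod_list (map lin xs) \<noteq> 0"
  by (induction xs) auto
lemma degree_prod_lin: "degree (prod_list (map lin xs)) = length xs"
  by (induction xs) (auto simp: degree_mult_eq prod_lin_nz)
lemma lead_lin[simp]: "lead_coeff (lin \<alpha>) = 1" by (simp add: lin_def)
lemma coeff_lin1[simp]: "coeff (lin \<alpha>) (Suc 0) = 1" by (simp add: lin_def)
lemma lead_prod_lin: "lead_coeff (prod_list (map lin xs)) = 1"
  by (induction xs) (auto simp: lead_coeff_mult)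
lemma poly_prod_lin: "poly (prod_list (map lin xs)) z = prod_list (map (\<lambda>\<alpha>. z - \<alpha>) xs)"
  by (induction xs) auto

lemma factor: "(h::'a poly) \<noteq> 0 \<Longrightarrow> \<exists>xs. h = smult (lead_coeff h) (prod_list (map lin xs)) \<and> length xs = degree h"
proof (induction "degree h" arbitrary: h)
  case 0
  then obtain c where "h = [:c:]" by (metis degree_eq_zeroE)
  then show ?case using 0 by (intro exI[of _ "[]"]) auto
next
  case (Suc n)
  then obtain \<alpha> where "poly h \<alpha> = 0" using alg[of h] by auto
  then obtain h' where h: "h = lin \<alpha> * h'" unfolding lin_def by (metis poly_eq_0_iff_dvd dvdE)
  have h'0: "h' \<noteq> 0" using Suc.prems h by auto
  have dh: "degree h = 1 + degree h'" using h h'0 by (simp add: degree_mult_eq)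
  then obtain xs where xs: "h' = smult (lead_coeff h') (prod_list (map lin xs))" "length xs = degree h'"
    using Suc(1)[of h'] Suc(2) h'0 by auto
  have lc: "lead_coeff h = lead_coeff h'" using h by (simp add: lead_coeff_mult del: lead_lin coeff_lin1) (simp add: lin_def)
  have "h = lin \<alpha> * smult (lead_coeff h') (prod_list (map lin xs))" using h xs(1) by simp
  also have "\<dots> = smult (lead_coeff h) (prod_list (map lin (\<alpha> # xs)))" using lc by simp
  finally show ?case using xs(2) dh by (intro exI[of _ "\<alpha> # xs"]) simp
qed

lemma prod_list_01: "(\<forall>x\<in>set xs. 0 \<le> f x \<and> f x \<le> (1::real)) \<Longrightarrow> 0 \<le> prod_list (map f xs) \<and> prod_list (map f xs) \<le> 1"
  by (induction xs) (auto intro: mult_le_one)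
lemma prod_list_le1: "(\<forall>x\<in>set xs. 0 \<le> f x \<and> f x \<le> (1::real)) \<Longrightarrow> prod_list (map f xs) = 1 \<Longrightarrow> x \<in> set xs \<Longrightarrow> f x = 1"
proof (induction xs)
  case (Cons y ys)
  have p: "0 \<le> prod_list (map f ys)" "prod_list (map f ys) \<le> 1"
    using Cons.prems(1) prod_list_01[of ys f] by auto
  have e: "f y * prod_list (map f ys) = 1" using Cons.prems(2) by simp
  have fy: "0 \<le> f y" "f y \<le> 1" using Cons.prems(1) by auto
  have "f y * prod_list (map f ys) \<le> f y" using fy p by (simp add: mult_left_le)
  moreover have "f y * prod_list (map f ys) \<le> prod_list (map f ys)" using fy p by (simp add: mult_left_le_one_le)
  ultimately have "f y = 1 \<and> prod_list (map f ys) = 1" using e fy p by linarith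
  then show ?case using Cons by auto
qed simp

lemma unit_dist: "\<forall>\<beta>\<in>set bs. av \<beta> \<le> 1 \<Longrightarrow> \<exists>u. av u \<le> 1 \<and> (\<forall>\<beta>\<in>set bs. av (u - \<beta>) = 1)"
proof (cases "bs = []")
  case True then show ?thesis by (intro exI[of _ 0]) auto
next
  case False
  assume bs: "\<forall>\<beta>\<in>set bs. av \<beta> \<le> 1"
  define P where "P = prod_list (map lin bs) + [:-1:]"
  have "degree P = length bs" unfolding P_def using False
    by (subst degree_add_eq_left) (auto simp: degree_prod_lin)
  then obtain u where "poly P u = 0" using alg[of P] False by (cases bs) auto
  then have pu: "prod_list (map (\<lambda>\<beta>. u - \<beta>) bs) = 1" unfolding P_def by (simp add: poly_prod_lin)
  then have apu: "prod_list (map (\<lambda>\<beta>. av (u - \<beta>)) bs) = 1" by (metis av_1 av_prod_list)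
  have u1: "av u \<le> 1"
  proof (rule ccontr)
    assume "\<not> av u \<le> 1"
    have "\<forall>\<beta>\<in>set bs. av (u - \<beta>) = av u"
    proof
      fix \<beta> assume "\<beta> \<in> set bs"
      then have "av (- \<beta>) < av u" using bs \<open>\<not> av u \<le> 1\<close> by auto
      from av_add_eq[OF this] show "av (u - \<beta>) = av u" by simp
    qed
    then have "prod_list (map (\<lambda>\<beta>. av (u - \<beta>)) bs) = prod_list (map (\<lambda>\<beta>. av u) bs)"
      by (intro arg_cong[where f=prod_list] map_cong) auto
    also have "\<dots> = av u ^ length bs" by (simp add: prod_list_replicate map_replicate_const)
    finally have "prod_list (map (\<lambda>\<beta>. av (u - \<beta>)) bs) = av u ^ length bs" .
    moreover have "av u ^ length bs > 1" using \<open>\<not> av u \<le> 1\<close> False by (simp add: one_less_power)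
    ultimately show False using apu by simp
  qed
  have le: "\<forall>\<beta>\<in>set bs. 0 \<le> av (u - \<beta>) \<and> av (u - \<beta>) \<le> 1"
  proof
    fix \<beta> assume "\<beta> \<in> set bs"
    then show "0 \<le> av (u - \<beta>) \<and> av (u - \<beta>) \<le> 1" using bs u1 av_diff[of u \<beta>] by auto
  qed
  have "\<forall>\<beta>\<in>set bs. av (u - \<beta>) = 1"
  proof
    fix \<beta> assume "\<beta> \<in> set bs"
    from prod_list_le1[OF le apu this] show "av (u - \<beta>) = 1" .
  qed
  with u1 show ?thesis by blast
qed

lemma gn_ge: "av (coeff p i) \<le> gauss_norm av p"
proof (cases "i \<le> degree p")
  case True then show ?thesis unfolding gauss_norm_def by (intro Max_ge) auto
next
  case False
  then have "coeff p i = 0" by (simp add: coeff_eq_0)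
  moreover have "av (coeff p 0) \<le> gauss_norm av p" unfolding gauss_norm_def by (intro Max_ge) auto
  moreover have "0 \<le> gauss_norm av p" using calculation(2) av_nonneg[of "coeff p 0"] by linarith
  ultimately show ?thesis by simp
qed

lemma gn_attained: "\<exists>i\<le>degree p. gauss_norm av p = av (coeff p i)"
proof -
  have "Max ((\<lambda>i. av (coeff p i)) ` {..degree p}) \<in> (\<lambda>i. av (coeff p i)) ` {..degree p}"
    by (intro Max_in) auto
  then obtain i where "i \<in> {..degree p}" "Max ((\<lambda>i. av (coeff p i)) ` {..degree p}) = av (coeff p i)"
    by blast
  then show ?thesis unfolding gauss_norm_def by auto
qed

lemma gn_le: "(\<And>i. av (coeff p i) \<le> M) \<Longrightarrow> gauss_norm av p \<le> M"
  using gn_attained[of p] by auto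

lemma gn_nonneg: "gauss_norm av p \<ge> 0"
  using gn_ge[of p 0] av_nonneg[of "coeff p 0"] by linarith

lemma gn_0[simp]: "gauss_norm av 0 = 0"
  using gn_le[of 0 0] gn_nonneg[of 0] by simp

lemma gn_pos: assumes "p \<noteq> 0" shows "gauss_norm av p > 0"
proof -
  have "lead_coeff p \<noteq> 0" using assms by simp
  then have "av (lead_coeff p) > 0" by simp
  then show ?thesis using gn_ge[of p "degree p"] by linarith
qed

lemma gn_1[simp]: "gauss_norm av 1 = 1"
  unfolding gauss_norm_def by simp

lemma gn_smult: "gauss_norm av (smult l p) = av l * gauss_norm av p"
proof (rule antisym)
  show "gauss_norm av (smult l p) \<le> av l * gauss_norm av p"
    by (rule gn_le) (simp add: mult_left_mono gn_ge)
  obtain i where "gauss_norm av p = av (coeff p i)" using gn_attained by blast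
  then have h: "av l * gauss_norm av p = av (coeff (smult l p) i)" by simp
  show "av l * gauss_norm av p \<le> gauss_norm av (smult l p)" using h gn_ge[of "smult l p" i] by linarith
qed

lemma coeff_mul_lin: "coeff (p * lin \<alpha>) k = (case k of 0 \<Rightarrow> 0 | Suc j \<Rightarrow> coeff p j) - \<alpha> * coeff p k"
  by (cases k) (simp_all add: lin_def)

lemma gn_lin: "gauss_norm av (p * lin \<alpha>) = gauss_norm av p * max 1 (av \<alpha>)"
proof (cases "p = 0")
  case True then show ?thesis by simp
next
  case False
  define G where "G = gauss_norm av p"
  have G0: "G > 0" using gn_pos False G_def by simp
  have cG: "\<And>i. av (coeff p i) \<le> G" using gn_ge G_def by simp
  have up: "gauss_norm av (p * lin \<alpha>) \<le> G * max 1 (av \<alpha>)"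
  proof (rule gn_le)
    fix k
    have pr: "av (case k of 0 \<Rightarrow> 0 | Suc j \<Rightarrow> coeff p j) \<le> G"
      using cG G0 by (cases k) auto
    have "av (\<alpha> * coeff p k) \<le> av \<alpha> * G" using cG by (simp add: mult_left_mono)
    moreover have m1: "G * 1 \<le> G * max 1 (av \<alpha>)" by (rule mult_left_mono) (use G0 in auto)
    moreover have m2: "G * av \<alpha> \<le> G * max 1 (av \<alpha>)" by (rule mult_left_mono) (use G0 in auto)
    ultimately show "av (coeff (p * lin \<alpha>) k) \<le> G * max 1 (av \<alpha>)"
      unfolding coeff_mul_lin using av_diff[of "case k of 0 \<Rightarrow> 0 | Suc j \<Rightarrow> coeff p j" "\<alpha> * coeff p k"] pr
      by (simp add: mult.commute max_def split: if_splits)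
  qed
  have "\<exists>k. av (coeff (p * lin \<alpha>) k) = G * max 1 (av \<alpha>)"
  proof (cases "av \<alpha> \<le> 1")
    case True
    define S where "S = {i. i \<le> degree p \<and> av (coeff p i) = G}"
    have fS: "finite S" unfolding S_def by auto
    have neS: "S \<noteq> {}" using gn_attained[of p] unfolding S_def G_def by auto
    define k where "k = Max S"
    have kS: "k \<in> S" using fS neS k_def Max_in by blast
    have nS: "Suc k \<notin> S"
    proof
      assume "Suc k \<in> S"
      then have "Suc k \<le> k" using Max_ge[OF fS] k_def by blast
      then show False by simp
    qed
    have lt: "av (coeff p (Suc k)) < G"
    proof (cases "Suc k \<le> degree p")
      case True then show ?thesis using nS cG[of "Suc k"] unfolding S_def by auto
    next
      case False then show ?thesis using G0 by (simp add: coeff_eq_0)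
    qed
    have "av (\<alpha> * coeff p (Suc k)) < G"
    proof -
      have "av (\<alpha> * coeff p (Suc k)) \<le> av (coeff p (Suc k))"
        using True by (simp add: mult_left_le_one_le)
      then show ?thesis using lt by linarith
    qed
    then have "av (coeff p k + - (\<alpha> * coeff p (Suc k))) = av (coeff p k)"
      using kS unfolding S_def by (intro av_add_eq) simp
    then have "av (coeff (p * lin \<alpha>) (Suc k)) = G" using kS unfolding S_def coeff_mul_lin by simp
    then show ?thesis using True by (intro exI[of _ "Suc k"]) simp
  next
    case False
    define k where "k = (LEAST i. av (coeff p i) = G)"
    have ex: "\<exists>i. av (coeff p i) = G" using gn_attained[of p] unfolding G_def by auto
    have kG: "av (coeff p k) = G" unfolding k_def using LeastI_ex[OF ex] .
    have ltk: "av (coeff p j) < G" if "j < k" for j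
    proof -
      have "av (coeff p j) \<noteq> G" using not_less_Least[OF that[unfolded k_def]] .
      then show ?thesis using cG[of j] by simp
    qed
    have pr: "av (case k of 0 \<Rightarrow> 0 | Suc j \<Rightarrow> coeff p j) < G"
      using ltk G0 by (cases k) auto
    have big: "av (- (\<alpha> * coeff p k)) = av \<alpha> * G" using kG by simp
    have "G < av \<alpha> * G" using False G0 by simp
    then have "av (- (\<alpha> * coeff p k) + (case k of 0 \<Rightarrow> 0 | Suc j \<Rightarrow> coeff p j)) = av \<alpha> * G"
      using pr big by (subst av_add_eq) auto
    then have "av (coeff (p * lin \<alpha>) k) = av \<alpha> * G" unfolding coeff_mul_lin by (simp add: algebra_simps)
    then show ?thesis using False by (intro exI[of _ k]) (simp add: mult.commute)
  qed
  then obtain k where "av (coeff (p * lin \<alpha>) k) = G * max 1 (av \<alpha>)" by blast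
  then have "G * max 1 (av \<alpha>) \<le> gauss_norm av (p * lin \<alpha>)" using gn_ge by metis
  then show ?thesis using up G_def by simp
qed

lemma gn_fact: "gauss_norm av (smult l (prod_list (map lin xs))) = av l * prod_list (map (\<lambda>\<alpha>. max 1 (av \<alpha>)) xs)"
proof (induction xs arbitrary: l)
  case Nil then show ?case using gn_smult[of l 1] by simp
next
  case (Cons x xs)
  have "gauss_norm av (smult l (prod_list (map lin (x # xs)))) = gauss_norm av (smult l (prod_list (map lin xs)) * lin x)"
    by (simp add: mult.commute)
  also have "\<dots> = gauss_norm av (smult l (prod_list (map lin xs))) * max 1 (av x)" by (rule gn_lin)
  also have "\<dots> = av l * prod_list (map (\<lambda>\<alpha>. max 1 (av \<alpha>)) xs) * max 1 (av x)" using Cons.IH by simp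
  finally show ?case by (simp add: mult_ac)
qed

lemma gn_mult: "gauss_norm av (p * q) = gauss_norm av p * gauss_norm av (q :: 'a poly)"
proof (cases "p = 0 \<or> q = 0")
  case True then show ?thesis by auto
next
  case False
  obtain xs where xs: "p = smult (lead_coeff p) (prod_list (map lin xs))" using factor False by blast
  obtain ys where ys: "q = smult (lead_coeff q) (prod_list (map lin ys))" using factor False by blast
  have "p * q = smult (lead_coeff p * lead_coeff q) (prod_list (map lin (xs @ ys)))"
    by (subst xs, subst ys) (simp add: mult_ac)
  then have "gauss_norm av (p * q) = av (lead_coeff p * lead_coeff q) * prod_list (map (\<lambda>\<alpha>. max 1 (av \<alpha>)) (xs @ ys))"
    by (simp only: gn_fact)
  also have "\<dots> = gauss_norm av p * gauss_norm av q"
    by (subst xs, subst ys, simp only: gn_fact) (simp add: mult_ac)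
  finally show ?thesis .
qed

lemma gn_prod: "gauss_norm av (prod_list (map f xs)) = prod_list (map (\<lambda>x. gauss_norm av (f x :: 'a poly)) xs)"
  by (induction xs) (simp_all add: gn_mult)

lemma prod_list_mono': "(\<forall>x\<in>set xs. 0 \<le> f x \<and> f x \<le> (g x::real)) \<Longrightarrow> 0 \<le> prod_list (map f xs) \<and> prod_list (map f xs) \<le> prod_list (map g xs)"
proof (induction xs)
  case (Cons a xs)
  then have h: "0 \<le> f a" "f a \<le> g a" "0 \<le> prod_list (map f xs)" "prod_list (map f xs) \<le> prod_list (map g xs)" by auto
  have "f a * prod_list (map f xs) \<le> g a * prod_list (map g xs)"
    by (rule mult_mono) (use h in linarith)+
  moreover have "0 \<le> f a * prod_list (map f xs)" using h by simp
  ultimately show ?case by simp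
qed simp

lemma disc_fact:
  assumes t: "av t = r" "r > 0"
  shows "disc_pt av c r (smult l (prod_list (map lin xs))) = av l * prod_list (map (\<lambda>\<alpha>. max r (av (c - \<alpha>))) xs)"
proof -
  define V where "V = av l * prod_list (map (\<lambda>\<alpha>. max r (av (c - \<alpha>))) xs)"
  have pv: "av (poly (smult l (prod_list (map lin xs))) z) = av l * prod_list (map (\<lambda>\<alpha>. av (z - \<alpha>)) xs)" for z
    by (simp add: poly_prod_lin av_prod_list)
  have bound: "av (poly (smult l (prod_list (map lin xs))) z) \<le> V" if z: "av (z - c) \<le> r" for z
  proof -
    have "\<forall>\<alpha>\<in>set xs. 0 \<le> av (z - \<alpha>) \<and> av (z - \<alpha>) \<le> max r (av (c - \<alpha>))"
    proof
      fix \<alpha>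
      have "av ((z - c) + (c - \<alpha>)) \<le> max (av (z - c)) (av (c - \<alpha>))" by (rule av_ultra)
      then show "0 \<le> av (z - \<alpha>) \<and> av (z - \<alpha>) \<le> max r (av (c - \<alpha>))" using z by simp
    qed
    from prod_list_mono'[OF this] show ?thesis unfolding pv V_def by (simp add: mult_left_mono)
  qed
  have t0: "t \<noteq> 0" using t by auto
  define ys where "ys = map (\<lambda>\<alpha>. (\<alpha> - c) / t) (filter (\<lambda>\<alpha>. av (c - \<alpha>) \<le> r) xs)"
  have "\<forall>\<beta>\<in>set ys. av \<beta> \<le> 1"
    unfolding ys_def using t by (auto simp: av_commute[of _ c])
  then obtain u where u: "av u \<le> 1" "\<forall>\<beta>\<in>set ys. av (u - \<beta>) = 1" using unit_dist by blast
  define z where "z = c + t * u"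
  have zc: "av (z - c) \<le> r" unfolding z_def using u t by (simp add: mult_left_le_one_le)
  have eq: "av (z - \<alpha>) = max r (av (c - \<alpha>))" if "\<alpha> \<in> set xs" for \<alpha>
  proof (cases "av (c - \<alpha>) \<le> r")
    case True
    then have "(\<alpha> - c) / t \<in> set ys" unfolding ys_def using that by auto
    then have "av (u - (\<alpha> - c) / t) = 1" using u by auto
    moreover have "z - \<alpha> = t * (u - (\<alpha> - c) / t)" unfolding z_def using t0 by (simp add: field_simps)
    ultimately show ?thesis using True t by simp
  next
    case False
    have "r * av u \<le> r" using t u by (simp add: mult_right_le_one_le)
    moreover have "av (t * u) = r * av u" using t by simp
    ultimately have "av (t * u) < av (c - \<alpha>)" using False by linarith
    then have a1: "av ((c - \<alpha>) + t * u) = av (c - \<alpha>)" by (rule av_add_eq)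
    have e: "z - \<alpha> = (c - \<alpha>) + t * u" unfolding z_def by simp
    have "av (z - \<alpha>) = av (c - \<alpha>)" unfolding e by (rule a1)
    then show ?thesis using False by simp
  qed
  have zV: "av (poly (smult l (prod_list (map lin xs))) z) = V"
    unfolding pv V_def using eq by (simp cong: map_cong)
  have "Sup ((\<lambda>z. av (poly (smult l (prod_list (map lin xs))) z)) ` {z. av (z - c) \<le> r}) = V"
  proof (rule cSup_eq_maximum)
    show "V \<in> (\<lambda>z. av (poly (smult l (prod_list (map lin xs))) z)) ` {z. av (z - c) \<le> r}"
      by (rule rev_image_eqI[of z]) (use zc zV in simp_all)
  next
    fix y assume "y \<in> (\<lambda>z. av (poly (smult l (prod_list (map lin xs))) z)) ` {z. av (z - c) \<le> r}"
    then obtain z' where "av (z' - c) \<le> r" "y = av (poly (smult l (prod_list (map lin xs))) z')" by blast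
    then show "y \<le> V" using bound by simp
  qed
  then show ?thesis unfolding disc_pt_def V_def by simp
qed

lemma poly_eq_on:
  fixes p q g :: "'a poly"
  assumes g: "g \<noteq> 0" and eq: "\<And>z. poly g z \<noteq> 0 \<Longrightarrow> poly p z = poly q z"
  shows "p = q"
proof (rule ccontr)
  assume "p \<noteq> q"
  then have "p - q \<noteq> 0" by simp
  then have f1: "finite {z. poly (p - q) z = 0}" by (rule poly_roots_finite)
  have f2: "finite {z. poly g z = 0}" using g by (rule poly_roots_finite)
  have "UNIV \<subseteq> {z. poly (p - q) z = 0} \<union> {z. poly g z = 0}"
  proof
    fix z :: 'a
    show "z \<in> {z. poly (p - q) z = 0} \<union> {z. poly g z = 0}"
    proof (cases "poly g z = 0")
      case False then show ?thesis using eq[of z] by simp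
    qed simp
  qed
  then have "finite (UNIV :: 'a set)" using f1 f2 finite_subset by blast
  then show False using infinite_univ by simp
qed

lemma prod_const_mult: "prod_list (map (\<lambda>x. (c::'b::comm_monoid_mult) * f x) xs) = c ^ length xs * prod_list (map f xs)"
  by (induction xs) (simp_all add: mult_ac)

lemma poly_prod_map: "poly (prod_list (map f xs)) z = prod_list (map (\<lambda>x. poly (f x) z) xs)"
  by (induction xs) simp_all

lemma hc_term:
  fixes G F hk :: 'a
  assumes "G \<noteq> 0" "k \<le> n"
  shows "G ^ n * (hk * (F / G) ^ k) = hk * (F ^ k * G ^ (n - k))"
proof -
  have "G ^ n = G ^ k * G ^ (n - k)" using assms(2) by (simp add: power_add[symmetric])
  then have "G ^ n * (hk * (F / G) ^ k) = hk * (((F / G) ^ k * G ^ k) * G ^ (n - k))"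
    by (simp add: mult_ac)
  moreover have "(F / G) ^ k * G ^ k = F ^ k" using assms(1) by (simp add: power_divide)
  ultimately show ?thesis by simp
qed

lemma hc_fact:
  fixes f g h :: "'a poly"
  assumes g: "g \<noteq> 0" and h: "h = smult l (prod_list (map lin xs))" and len: "length xs = degree h"
  shows "(\<Sum>k\<le>degree h. smult (coeff h k) (f ^ k * g ^ (degree h - k))) = smult l (prod_list (map (\<lambda>\<alpha>. f - smult \<alpha> g) xs))"
proof (rule poly_eq_on[OF g])
  fix z assume G: "poly g z \<noteq> 0"
  define F where "F = poly f z"
  define GG where "GG = poly g z"
  have "poly (\<Sum>k\<le>degree h. smult (coeff h k) (f ^ k * g ^ (degree h - k))) z
        = (\<Sum>k\<le>degree h. coeff h k * (F ^ k * GG ^ (degree h - k)))"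
    by (simp add: poly_sum F_def GG_def)
  also have "\<dots> = (\<Sum>k\<le>degree h. GG ^ degree h * (coeff h k * (F / GG) ^ k))"
    by (rule sum.cong) (use G in \<open>simp_all add: hc_term GG_def\<close>)
  also have "\<dots> = GG ^ degree h * poly h (F / GG)"
    by (simp add: poly_altdef sum_distrib_left)
  also have "poly h (F / GG) = l * prod_list (map (\<lambda>\<alpha>. F / GG - \<alpha>) xs)"
    using h by (simp add: poly_prod_lin)
  also have "GG ^ degree h * (l * prod_list (map (\<lambda>\<alpha>. F / GG - \<alpha>) xs))
       = l * prod_list (map (\<lambda>\<alpha>. GG * (F / GG - \<alpha>)) xs)"
    using len by (simp add: prod_const_mult)
  also have "\<dots> = l * prod_list (map (\<lambda>\<alpha>. F - \<alpha> * GG) xs)"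
    using G unfolding GG_def by (simp add: algebra_simps)
  also have "\<dots> = poly (smult l (prod_list (map (\<lambda>\<alpha>. f - smult \<alpha> g) xs))) z"
    by (simp add: poly_prod_map F_def GG_def)
  finally show "poly (\<Sum>k\<le>degree h. smult (coeff h k) (f ^ k * g ^ (degree h - k))) z =
       poly (smult l (prod_list (map (\<lambda>\<alpha>. f - smult \<alpha> g) xs))) z" .
qed

lemma image_fact:
  fixes f g h :: "'a poly"
  assumes g: "g \<noteq> 0" and h: "h = smult l (prod_list (map lin xs))" and len: "length xs = degree h"
  shows "image_gauss_pt av f g h = av l * prod_list (map (\<lambda>\<alpha>. gauss_norm av (f - smult \<alpha> g)) xs) / gauss_norm av g ^ degree h"
proof -
  have "image_gauss_pt av f g h = gauss_norm av (\<Sum>k\<le>degree h. smult (coeff h k) (f ^ k * g ^ (degree h - k))) / gauss_norm av g ^ degree h"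
    unfolding image_gauss_pt_def by simp
  also have "\<dots> = gauss_norm av (smult l (prod_list (map (\<lambda>\<alpha>. f - smult \<alpha> g) xs))) / gauss_norm av g ^ degree h"
    by (simp only: hc_fact[OF g h len])
  also have "\<dots> = av l * prod_list (map (\<lambda>\<alpha>. gauss_norm av (f - smult \<alpha> g)) xs) / gauss_norm av g ^ degree h"
    by (simp only: gn_smult gn_prod)
  finally show ?thesis .
qed

lemma lin_le:
  fixes f g :: "'a poly"
  shows "gauss_norm av (f - smult \<beta> g) \<le> max (gauss_norm av (f - smult \<gamma> g)) (av (\<gamma> - \<beta>) * gauss_norm av g)"
proof (rule gn_le)
  fix i
  have e: "coeff (f - smult \<beta> g) i = coeff (f - smult \<gamma> g) i + (\<gamma> - \<beta>) * coeff g i"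
    by (simp add: algebra_simps)
  have "av (coeff (f - smult \<gamma> g) i + (\<gamma> - \<beta>) * coeff g i) \<le> max (av (coeff (f - smult \<gamma> g) i)) (av ((\<gamma> - \<beta>) * coeff g i))"
    by (rule av_ultra)
  moreover have "av (coeff (f - smult \<gamma> g) i) \<le> gauss_norm av (f - smult \<gamma> g)" by (rule gn_ge)
  moreover have "av ((\<gamma> - \<beta>) * coeff g i) \<le> av (\<gamma> - \<beta>) * gauss_norm av g"
    using gn_ge[of g i] by (simp add: mult_left_mono)
  ultimately show "av (coeff (f - smult \<beta> g) i) \<le> max (gauss_norm av (f - smult \<gamma> g)) (av (\<gamma> - \<beta>) * gauss_norm av g)"
    unfolding e by linarith
qed

lemma lin_eq:
  fixes f g :: "'a poly"
  assumes kk: "av (coeff g kk) = gauss_norm av g" "coeff g kk \<noteq> 0" and c: "c = coeff f kk / coeff g kk"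
  shows "gauss_norm av (f - smult \<alpha> g) = max (gauss_norm av (f - smult c g)) (gauss_norm av g * av (c - \<alpha>))"
proof -
  have fkk: "coeff f kk = c * coeff g kk" using c kk by simp
  have "av (coeff (f - smult \<alpha> g) kk) = av ((c - \<alpha>) * coeff g kk)"
    using fkk by (simp add: algebra_simps)
  then have g1: "gauss_norm av g * av (c - \<alpha>) \<le> gauss_norm av (f - smult \<alpha> g)"
    using gn_ge[of "f - smult \<alpha> g" kk] kk by (simp add: mult.commute)
  have "gauss_norm av (f - smult c g) \<le> max (gauss_norm av (f - smult \<alpha> g)) (av (\<alpha> - c) * gauss_norm av g)"
    by (rule lin_le)
  then have g2: "gauss_norm av (f - smult c g) \<le> gauss_norm av (f - smult \<alpha> g)"
    using g1 av_commute[of \<alpha> c] by (simp add: mult.commute)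
  have "gauss_norm av (f - smult \<alpha> g) \<le> max (gauss_norm av (f - smult c g)) (av (c - \<alpha>) * gauss_norm av g)"
    by (rule lin_le)
  then show ?thesis using g1 g2 by (simp add: mult.commute)
qed

lemma disc_lin: assumes "av t = r" "r > 0" shows "disc_pt av c r (lin a) = max r (av (c - a))"
  using disc_fact[OF assms, of c 1 "[a]"] by simp

lemma disc_upper:
  assumes "r' > 0"
  shows "disc_pt av c' r' (lin a) \<le> max r' (av (c' - a))"
    and "av (z - c') \<le> r' \<Longrightarrow> av (z - a) \<le> disc_pt av c' r' (lin a)"
proof -
  have bd: "av (z - a) \<le> max r' (av (c' - a))" if "av (z - c') \<le> r'" for z
  proof -
    have "av ((z - c') + (c' - a)) \<le> max (av (z - c')) (av (c' - a))" by (rule av_ultra)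
    then show ?thesis using that by simp
  qed
  have ne: "{z. av (z - c') \<le> r'} \<noteq> {}" using assms by (auto intro: exI[of _ c'])
  show "disc_pt av c' r' (lin a) \<le> max r' (av (c' - a))"
  proof -
    have "(SUP z\<in>{z. av (z - c') \<le> r'}. av (poly (lin a) z)) \<le> max r' (av (c' - a))"
      by (rule cSUP_least[OF ne]) (use bd in simp)
    then show ?thesis unfolding disc_pt_def .
  qed
  assume z: "av (z - c') \<le> r'"
  have "bdd_above ((\<lambda>z. av (poly (lin a) z)) ` {z. av (z - c') \<le> r'})"
    by (rule bdd_aboveI[of _ "max r' (av (c' - a))"]) (use bd in auto)
  then have "av (poly (lin a) z) \<le> (SUP z\<in>{z. av (z - c') \<le> r'}. av (poly (lin a) z))"
    by (rule cSUP_upper[rotated]) (use z in simp)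
  then show "av (z - a) \<le> disc_pt av c' r' (lin a)" unfolding disc_pt_def by simp
qed

lemma disc_unique:
  assumes t: "av t = r" "r > 0" and r': "r' > 0" and eq: "disc_pt av c r = disc_pt av c' r'"
  shows "r' = r \<and> av (c - c') \<le> r"
proof -
  have E1: "max r (av (c - c')) \<le> r'"
    using disc_lin[OF t, of c c'] disc_upper(1)[OF r', of c' c'] eq r' by simp
  have "av (c' - c) \<le> disc_pt av c' r' (lin c)"
    by (rule disc_upper(2)[OF r']) (use r' in simp)
  then have E2: "av (c - c') \<le> r"
    using disc_lin[OF t, of c c] eq av_commute[of c c'] t by simp
  have "\<not> r < r'"
  proof
    assume "r < r'"
    then have "r' / r > 1" using t by simp
    then obtain y where y: "1 < av y" "av y < r' / r" using density by blast
    define z where "z = c' + t * y"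
    have az: "av (z - c') = r * av y" unfolding z_def using t by simp
    have "r * av y < r'" using y t by (simp add: field_simps)
    then have "av (z - c') \<le> disc_pt av c' r' (lin c')"
      using az by (intro disc_upper(2)[OF r']) simp
    also have "\<dots> = max r (av (c - c'))" using disc_lin[OF t, of c c'] eq by simp
    also have "\<dots> = r" using E2 by simp
    finally have "r * av y \<le> r" using az by simp
    then show False using y t by simp
  qed
  then show ?thesis using E1 E2 by simp
qed

end

lemma coeff_form_poly: "coeff (form_poly a d) i = (if i \<le> d then a i else 0)"
  unfolding form_poly_def by (simp add: coeff_sum coeff_monom)

lemma degree_form_poly: "degree (form_poly a d) \<le> d"
  by (rule degree_le) (simp add: coeff_form_poly)

theorem proposition4p4:
  fixes av :: "'a::field \<Rightarrow> real" and d :: nat and a b :: "nat \<Rightarrow> 'a"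
  assumes "CNA_field av"
    and "d \<ge> 1"
    and "normalized_rep av d a b"
  shows "GIR av (form_poly a d) (form_poly b d) =
         Max {av (a i * b j - a j * b i) | i j. i \<le> d \<and> j \<le> d \<and> i \<noteq> j}"
proof -
  interpret cna av by unfold_locales (rule assms(1))
  define f where "f = form_poly a d"
  define g where "g = form_poly b d"
  have cf: "coeff f i = (if i \<le> d then a i else 0)" for i unfolding f_def by (rule coeff_form_poly)
  have cg: "coeff g i = (if i \<le> d then b i else 0)" for i unfolding g_def by (rule coeff_form_poly)
  have df: "degree f \<le> d" unfolding f_def by (rule degree_form_poly)
  have dg: "degree g \<le> d" unfolding g_def by (rule degree_form_poly)
  have le1: "\<forall>i\<le>d. av (a i) \<le> 1 \<and> av (b i) \<le> 1"
    and ex1: "\<exists>i\<le>d. av (a i) = 1 \<or> av (b i) = 1"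
    and ncf: "forms_no_common_factor f g d"
    using assms(3) unfolding normalized_rep_def f_def g_def by auto
  have g0: "g \<noteq> 0"
  proof
    assume g0: "g = 0"
    show False
    proof (cases "f = 0")
      case True
      have "form_dvd 1 1 f d" "form_dvd 1 1 g d" using True g0 assms(2) unfolding form_dvd_def by auto
      then show False using ncf unfolding forms_no_common_factor_def by fastforce
    next
      case False
      have "form_dvd f d f d" unfolding form_dvd_def by (intro conjI exI[of _ 1]) auto
      moreover have "form_dvd f d g d" using g0 unfolding form_dvd_def by (intro conjI exI[of _ 0]) auto
      ultimately show False using ncf False df assms(2) unfolding forms_no_common_factor_def by blast
    qed
  qed
  have fnc: "f - smult \<gamma> g \<noteq> 0" for \<gamma>
  proof
    assume "f - smult \<gamma> g = 0"
    then have fe: "f = g * [:\<gamma>:]" by simp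
    have "form_dvd g d f d" unfolding form_dvd_def using fe by (intro conjI exI[of _ "[:\<gamma>:]"]) auto
    moreover have "form_dvd g d g d" unfolding form_dvd_def by (intro conjI exI[of _ 1]) auto
    ultimately show False using ncf g0 dg assms(2) unfolding forms_no_common_factor_def by blast
  qed
  define B where "B = gauss_norm av g"
  have B0: "B > 0" unfolding B_def using gn_pos[OF g0] .
  obtain i0 where i0: "i0 \<le> degree g" "B = av (coeff g i0)" using gn_attained[of g] unfolding B_def by blast
  have gi0: "coeff g i0 \<noteq> 0" using i0 B0 by auto
  define c where "c = coeff f i0 / coeff g i0"
  define N where "N = (\<lambda>\<alpha>. gauss_norm av (f - smult \<alpha> g))"
  define Nc where "Nc = N c"
  have Nc0: "Nc > 0" unfolding Nc_def N_def using gn_pos[OF fnc] .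
  define r where "r = Nc / B"
  have r0: "r > 0" unfolding r_def using Nc0 B0 by simp
  have Nlin: "N \<alpha> = B * max r (av (c - \<alpha>))" for \<alpha>
  proof -
    have "N \<alpha> = max Nc (B * av (c - \<alpha>))"
      unfolding N_def Nc_def B_def by (rule lin_eq[where f=f and g=g and kk=i0 and c=c]) (use i0 gi0 c_def B_def in auto)
    also have "\<dots> = B * max r (av (c - \<alpha>))"
      unfolding r_def using B0 by (simp add: max_mult_distrib_left)
    finally show ?thesis .
  qed
  obtain j where j: "j \<le> degree (f - smult c g)" "Nc = av (coeff (f - smult c g) j)"
    using gn_attained[of "f - smult c g"] unfolding Nc_def N_def by blast
  define t where "t = coeff (f - smult c g) j / coeff g i0"
  have t: "av t = r" unfolding t_def r_def using j i0 by simp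
  have img: "image_gauss_pt av f g = disc_pt av c r"
  proof
    fix h :: "'a poly"
    show "image_gauss_pt av f g h = disc_pt av c r h"
    proof (cases "h = 0")
      case True
      have ne: "{z. av (z - c) \<le> r} \<noteq> {}" using r0 by (auto intro: exI[of _ c])
      have "disc_pt av c r h = 0" unfolding disc_pt_def True using ne by simp
      moreover have "image_gauss_pt av f g h = 0" unfolding image_gauss_pt_def True by simp
      ultimately show ?thesis by simp
    next
      case False
      obtain xs where xs: "h = smult (lead_coeff h) (prod_list (map lin xs))" "length xs = degree h"
        using factor[OF False] by blast
      have "image_gauss_pt av f g h = av (lead_coeff h) * prod_list (map N xs) / B ^ degree h"
        unfolding N_def B_def by (rule image_fact[OF g0 xs])
      also have "\<dots> = av (lead_coeff h) * prod_list (map (\<lambda>\<alpha>. B * max r (av (c - \<alpha>))) xs) / B ^ degree h"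
        using Nlin by (simp cong: map_cong)
      also have "\<dots> = av (lead_coeff h) * prod_list (map (\<lambda>\<alpha>. max r (av (c - \<alpha>))) xs)"
        using B0 xs(2) by (simp add: prod_const_mult)
      also have "\<dots> = disc_pt av c r h"
        by (subst xs(1), rule disc_fact[OF t r0, symmetric])
      finally show ?thesis .
    qed
  qed
  define T where "T = r / (max 1 (max (av c) r))\<^sup>2"
  have gir: "GIR av f g = T"
    unfolding GIR_def diam_G_def img
  proof (rule the_equality)
    show "\<exists>c' r'. r' > 0 \<and> disc_pt av c r = disc_pt av c' r' \<and> T = r' / (max 1 (max (av c') r'))\<^sup>2"
      using r0 T_def by blast
  next
    fix T' assume "\<exists>c' r'. r' > 0 \<and> disc_pt av c r = disc_pt av c' r' \<and> T' = r' / (max 1 (max (av c') r'))\<^sup>2"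
    then obtain c' r' where cr: "r' > 0" "disc_pt av c r = disc_pt av c' r'" "T' = r' / (max 1 (max (av c') r'))\<^sup>2"
      by blast
    have u: "r' = r" "av (c - c') \<le> r" using disc_unique[OF t r0 cr(1) cr(2)] by auto
    have "av c' \<le> max (av c) r"
      using av_diff[of c "c - c'"] u(2) by simp
    moreover have "av c \<le> max (av c') r"
      using av_ultra[of c' "c - c'"] u(2) by simp
    ultimately have "max (av c') r = max (av c) r" by linarith
    then show "T' = T" unfolding T_def cr(3) u(1) by simp
  qed
  define A where "A = gauss_norm av f"
  have A1: "A \<le> 1" unfolding A_def by (rule gn_le) (use le1 cf in auto)
  have B1: "B \<le> 1" unfolding B_def by (rule gn_le) (use le1 cg in auto)
  have AB: "A = 1 \<or> B = 1"
  proof -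
    obtain i where i: "i \<le> d" "av (a i) = 1 \<or> av (b i) = 1" using ex1 by blast
    have "av (coeff f i) \<le> A" "av (coeff g i) \<le> B" unfolding A_def B_def by (rule gn_ge)+
    then show ?thesis using i cf cg A1 B1 by auto
  qed
  have "A = N 0" unfolding A_def N_def by simp
  then have AN: "A = B * max r (av c)" using Nlin[of 0] by simp
  have mx: "max 1 (max (av c) r) = 1 / B"
  proof -
    have "max (av c) r = A / B" using AN B0 by (simp add: max.commute field_simps)
    then have "max 1 (max (av c) r) = max 1 (A / B)" by simp
    also have "\<dots> = 1 / B"
    proof (cases "A = 1")
      case True
      have "1 \<le> 1 / B" using B0 B1 by simp
      then show ?thesis using True by simp
    next
      case False
      then have "B = 1" using AB by simp
      then show ?thesis using A1 by simp
    qed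
    finally show ?thesis .
  qed
  have T: "T = Nc * B" unfolding T_def mx using B0 by (simp add: r_def field_simps power2_eq_square)
  define S where "S = {av (a i * b j - a j * b i) | i j. i \<le> d \<and> j \<le> d \<and> i \<noteq> j}"
  have fS: "finite S"
  proof -
    have "S \<subseteq> (\<lambda>(i, j). av (a i * b j - a j * b i)) ` ({..d} \<times> {..d})" unfolding S_def by auto
    then show ?thesis by (rule finite_subset) simp
  qed
  have coeffD: "av (coeff (f - smult c g) k) \<le> Nc" for k unfolding Nc_def N_def by (rule gn_ge)
  have jd: "j \<le> d"
  proof (rule ccontr)
    assume "\<not> j \<le> d"
    then have "coeff (f - smult c g) j = 0" using cf cg by simp
    then show False using j Nc0 by simp
  qed
  have i0d: "i0 \<le> d" using i0 dg by simp
  have ci0: "coeff (f - smult c g) i0 = 0" unfolding c_def using gi0 by simp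
  have ji0: "j \<noteq> i0" using ci0 j Nc0 by auto
  have bi0: "b i0 = coeff g i0" "av (b i0) = B" using cg i0 i0d by auto
  have ai0: "a i0 = c * b i0" using cf bi0 i0d gi0 unfolding c_def by simp
  have inS: "Nc * B \<in> S"
  proof -
    have "a j * b i0 - a i0 * b j = b i0 * (a j - c * b j)" using ai0 by (simp add: algebra_simps)
    moreover have "a j - c * b j = coeff (f - smult c g) j" using cf cg jd by simp
    ultimately have ev: "av (a j * b i0 - a i0 * b j) = Nc * B" using j bi0 by simp
    show ?thesis unfolding S_def mem_Collect_eq
      by (intro exI[of _ j] exI[of _ i0]) (use ev jd i0d ji0 in auto)
  qed
  have bound: "y \<le> Nc * B" if "y \<in> S" for y
  proof -
    obtain i k where ik: "y = av (a i * b k - a k * b i)" "i \<le> d" "k \<le> d" using \<open>y \<in> S\<close> unfolding S_def by blast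
    define D where "D = (\<lambda>m. b i0 * (a m - c * b m))"
    have Dle: "av (D m) \<le> B * Nc" if "m \<le> d" for m
    proof -
      have "a m - c * b m = coeff (f - smult c g) m" using cf cg that by simp
      then show ?thesis unfolding D_def using bi0 coeffD[of m] B0 by (simp add: mult_left_mono)
    qed
    have bk: "av (b m) \<le> B" if "m \<le> d" for m using gn_ge[of g m] cg that unfolding B_def by simp
    have idt: "b i0 * (a i * b k - a k * b i) = D i * b k - D k * b i" unfolding D_def by (simp add: algebra_simps)
    have "av (D i * b k) \<le> B * Nc * B" using Dle[OF ik(2)] bk[OF ik(3)] B0 Nc0
      by (simp add: mult_mono)
    moreover have "av (D k * b i) \<le> B * Nc * B" using Dle[OF ik(3)] bk[OF ik(2)] B0 Nc0
      by (simp add: mult_mono)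
    ultimately have "av (D i * b k - D k * b i) \<le> B * Nc * B"
      using av_diff[of "D i * b k" "D k * b i"] by linarith
    moreover have "av (b i0 * (a i * b k - a k * b i)) = B * y" using bi0 ik(1) by simp
    ultimately have "B * y \<le> B * Nc * B" unfolding idt by linarith
    then have "B * y \<le> B * (Nc * B)" by (simp add: mult_ac)
    then show ?thesis using B0 by simp
  qed
  have "Max S = Nc * B" by (rule Max_eqI[OF fS bound inS])
  then show ?thesis using gir T unfolding S_def f_def g_def by simp
qed

end
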